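(* Under the standing setting below, assume moreover the regularity condition: there exists $c_r>0$ with $\|\nabla_y g(x,y)\|\le c_r\|\nabla h(x,y)\|$ for all $(x,y)$. Take $\rho(x,y)=\|\nabla h(x,y)\|^2$ and $C_0>0$; for an integer $K\ge1$ set $\alpha=K^{-1/3}$, $\gamma=\min\{\alpha,\frac{1}{L_f+\alpha L_h}\}$, let $(x_0,y_0)$ satisfy $h(x_0,y_0)\le\alpha^2C_0$, and run the Algorithm. Then for every $\epsilon>0$ there is $K=\mathcal{O}(\epsilon^{-3/2})$ such that some $t\in\{0,\dots,K-1\}$ satisfies $$\max\{\|\nabla_y g(x_t,y_t)\|^2,\ \|\nabla f_t+\lambda_t\nabla h_t\|^2\}\le\epsilon,$$ i.e. $(x_t,y_t,\lambda_t)$ is an $\epsilon$-KKT point of $\min_{(x,y)} f(x,y)$ s.t. $h(x,y)=0$.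
   Context: Standing setting. $f,g:\mathbb{R}^n\times\mathbb{R}^m\to\mathbb{R}$. $f$ is continuously differentiable, $\bar f:=\inf f>-\infty$, $\nabla f$ is $L_f$-Lipschitz, and $\|\nabla f\|\le C_f$ everywhere. $g$ is twice continuously differentiable, and $h(x,y):=\|\nabla_y g(x,y)\|^2$ is continuously differentiable with $\nabla h$ being $L_h$-Lipschitz ($L_h>0$). Write $\nabla h=(\nabla_x h,\nabla_y h)$, $f_k=f(x_k,y_k)$, $h_k=h(x_k,y_k)$, $\nabla f_k=\nabla f(x_k,y_k)$, $\nabla h_k=\nabla h(x_k,y_k)$, etc. Given $\rho\ge0$, $\alpha,\gamma>0$, $(x_0,y_0)$, the Algorithm iterates for $k\ge0$: $\lambda_k=\big[-\nabla_x h_k^\top\nabla_x f_k-\nabla_y h_k^\top\nabla_y f_k+\alpha\rho(x_k,y_k)\big]_+/(\|\nabla_x h_k\|^2+\|\nabla_y h_k\|^2)$ if $\nabla h_k\ne0$, $\lambda_k=0$ otherwise; $\Delta_k^x=-\nabla_x f_k-\lambda_k\nabla_x h_k$, $\Delta_k^y=-\nabla_y f_k-\lambda_k\nabla_y h_k$; $x_{k+1}=x_k+\gamma\Delta_k^x$, $y_{k+1}=y_k+\gamma\Delta_k^y$. A triple $(x,y,\lambda)\in\mathbb{R}^n\times\mathbb{R}^m\times\mathbb{R}$ is an $\epsilon$-KKT point of $\min f$ s.t. $h=0$ if $h(x,y)\le\epsilon$ and $\|\nabla f(x,y)+\lambda\nabla h(x,y)\|^2\le\epsilon$. *)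

theory Defs
  imports "HOL-Analysis.Analysis"
begin

definition alg_lambda ::
  "('p \<Rightarrow> ('a::real_inner \<times> 'b::real_inner)) \<Rightarrow> ('p \<Rightarrow> 'a \<times> 'b) \<Rightarrow> ('p \<Rightarrow> real) \<Rightarrow> real \<Rightarrow> 'p \<Rightarrow> real"
where
  "alg_lambda Df Dh \<rho> \<alpha> p =
     (if Dh p \<noteq> 0 then
        max 0 (- (fst (Dh p) \<bullet> fst (Df p)) - (snd (Dh p) \<bullet> snd (Df p)) + \<alpha> * \<rho> p)
          / ((norm (fst (Dh p)))\<^sup>2 + (norm (snd (Dh p)))\<^sup>2)
      else 0)"

primrec alg_iter ::
  "('a::real_inner \<times> 'b::real_inner \<Rightarrow> 'a \<times> 'b) \<Rightarrow> ('a \<times> 'b \<Rightarrow> 'a \<times> 'b) \<Rightarrow> ('a \<times> 'b \<Rightarrow> real)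
     \<Rightarrow> real \<Rightarrow> real \<Rightarrow> 'a \<times> 'b \<Rightarrow> nat \<Rightarrow> 'a \<times> 'b"
where
  "alg_iter Df Dh \<rho> \<alpha> \<gamma> p0 0 = p0"
| "alg_iter Df Dh \<rho> \<alpha> \<gamma> p0 (Suc k) =
     (let p = alg_iter Df Dh \<rho> \<alpha> \<gamma> p0 k;
          l = alg_lambda Df Dh \<rho> \<alpha> p;
          dx = - fst (Df p) - l *\<^sub>R fst (Dh p);
          dy = - snd (Df p) - l *\<^sub>R snd (Dh p)
      in (fst p + \<gamma> *\<^sub>R dx, snd p + \<gamma> *\<^sub>R dy))"

end

theory Submission
  imports Defs
begin

lemma descent:
  fixes F :: "'a::real_inner \<Rightarrow> real" and DF :: "'a \<Rightarrow> 'a"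
  assumes grad: "\<And>p. (F has_derivative (\<lambda>v. DF p \<bullet> v)) (at p)"
    and lip: "\<And>p q. norm (DF p - DF q) \<le> L * norm (p - q)"
  shows "F q \<le> F p + DF p \<bullet> (q - p) + L / 2 * (norm (q - p))\<^sup>2"
proof -
  define d where "d = q - p"
  define g where "g = (\<lambda>t::real. F (p + t *\<^sub>R d) - t * (DF p \<bullet> d) - L / 2 * t\<^sup>2 * (norm d)\<^sup>2)"
  define g' where "g' = (\<lambda>t::real. DF (p + t *\<^sub>R d) \<bullet> d - DF p \<bullet> d - L * t * (norm d)\<^sup>2)"
  have "g 1 \<le> g 0"
  proof (rule deriv_nonpos_imp_antimono[where g=g and g'=g' and a=0 and b=1])
    fix t :: real assume t: "t \<in> {0..1}"
    have h1: "((\<lambda>t. F (p + t *\<^sub>R d)) has_derivative (\<lambda>s. DF (p + t *\<^sub>R d) \<bullet> (s *\<^sub>R d))) (at t)"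
      by (rule has_derivative_compose[of "\<lambda>t. p + t *\<^sub>R d" _ t UNIV F, OF _ grad])
         (auto intro!: derivative_eq_intros)
    have h2: "((\<lambda>t. F (p + t *\<^sub>R d)) has_real_derivative (DF (p + t *\<^sub>R d) \<bullet> d)) (at t)"
    proof -
      have "(\<lambda>s. DF (p + t *\<^sub>R d) \<bullet> (s *\<^sub>R d)) = (*) (DF (p + t *\<^sub>R d) \<bullet> d)"
        by (simp add: fun_eq_iff mult.commute)
      then show ?thesis using h1 unfolding has_field_derivative_def by simp
    qed
    show "(g has_real_derivative g' t) (at t)"
    proof -
      have h3: "((\<lambda>t. t * (DF p \<bullet> d)) has_real_derivative DF p \<bullet> d) (at t)"
        by (auto intro!: derivative_eq_intros)
      have h4: "((\<lambda>t. L / 2 * t\<^sup>2 * (norm d)\<^sup>2) has_real_derivative L * t * (norm d)\<^sup>2) (at t)"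
        by (auto intro!: derivative_eq_intros)
      show ?thesis unfolding g_def g'_def using DERIV_diff[OF DERIV_diff[OF h2 h3] h4] by simp
    qed
    have "(DF (p + t *\<^sub>R d) - DF p) \<bullet> d \<le> norm (DF (p + t *\<^sub>R d) - DF p) * norm d"
      by (rule norm_cauchy_schwarz)
    also have "\<dots> \<le> L * norm (t *\<^sub>R d) * norm d"
      using lip[of "p + t *\<^sub>R d" p] by (simp add: mult_right_mono)
    also have "\<dots> = L * t * (norm d)\<^sup>2" using t by (simp add: power2_eq_square)
    finally show "g' t \<le> 0" unfolding g'_def by (simp add: inner_diff_left)
  qed simp
  then show ?thesis unfolding g_def d_def by simp
qed

lemma alg_lambda_eq:
  fixes Df Dh :: "'p \<Rightarrow> 'a::real_inner \<times> 'b::real_inner"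
  shows "alg_lambda Df Dh (\<lambda>p. (norm (Dh p))\<^sup>2) \<alpha> p =
    (if Dh p \<noteq> 0 then max 0 (- (Dh p \<bullet> Df p) + \<alpha> * (norm (Dh p))\<^sup>2) / (norm (Dh p))\<^sup>2 else 0)"
proof -
  have "fst (Dh p) \<bullet> fst (Df p) + snd (Dh p) \<bullet> snd (Df p) = Dh p \<bullet> Df p"
    by (simp add: inner_prod_def)
  moreover have "(norm (fst (Dh p)))\<^sup>2 + (norm (snd (Dh p)))\<^sup>2 = (norm (Dh p))\<^sup>2"
    by (simp add: norm_prod_def)
  ultimately show ?thesis unfolding alg_lambda_def
    by (simp add: algebra_simps)
qed

lemma lam_facts:
  fixes Df Dh :: "'p \<Rightarrow> 'a::real_inner \<times> 'b::real_inner" and p :: 'p and \<alpha> :: real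
  assumes a0: "\<alpha> \<ge> 0"
    and l_def: "l = alg_lambda Df Dh (\<lambda>p. (norm (Dh p))\<^sup>2) \<alpha> p" and \<Delta>_def: "\<Delta> = - Df p - l *\<^sub>R Dh p"
  shows "l \<ge> 0" "Dh p \<bullet> \<Delta> \<le> - \<alpha> * (norm (Dh p))\<^sup>2"
    "- l * (Dh p \<bullet> \<Delta>) \<le> \<alpha> * (norm (Df p) * norm (Dh p) + \<alpha> * (norm (Dh p))\<^sup>2)"
proof -
  have cs: "- (Dh p \<bullet> Df p) \<le> norm (Df p) * norm (Dh p)"
    using norm_cauchy_schwarz[of "- Dh p" "Df p"] by (simp add: mult.commute)
  have dd: "Dh p \<bullet> \<Delta> = - (Dh p \<bullet> Df p) - l * (norm (Dh p))\<^sup>2"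
    unfolding \<Delta>_def by (simp add: inner_diff_right power2_norm_eq_inner)
  have nn: "0 \<le> norm (Df p) * norm (Dh p)" by simp
  show "l \<ge> 0" "Dh p \<bullet> \<Delta> \<le> - \<alpha> * (norm (Dh p))\<^sup>2"
    "- l * (Dh p \<bullet> \<Delta>) \<le> \<alpha> * (norm (Df p) * norm (Dh p) + \<alpha> * (norm (Dh p))\<^sup>2)"
  proof (atomize(full), cases "Dh p = 0")
    case True
    then have "l = 0" unfolding l_def alg_lambda_eq by simp
    then show "0 \<le> l \<and> Dh p \<bullet> \<Delta> \<le> - \<alpha> * (norm (Dh p))\<^sup>2 \<and>
      - l * (Dh p \<bullet> \<Delta>) \<le> \<alpha> * (norm (Df p) * norm (Dh p) + \<alpha> * (norm (Dh p))\<^sup>2)"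
      using True a0 by simp
  next
    case False
    define n where "n = (norm (Dh p))\<^sup>2"
    define s where "s = - (Dh p \<bullet> Df p) + \<alpha> * n"
    have n0: "n > 0" using False unfolding n_def by simp
    have l: "l = max 0 s / n" unfolding l_def alg_lambda_eq s_def n_def using False by simp
    have ln: "l * n = max 0 s" using l n0 by simp
    have "l \<ge> 0" using l n0 by simp
    moreover have "Dh p \<bullet> \<Delta> \<le> - \<alpha> * n" using dd ln unfolding n_def[symmetric] s_def
      by linarith
    moreover have "- l * (Dh p \<bullet> \<Delta>) \<le> \<alpha> * (norm (Df p) * norm (Dh p) + \<alpha> * n)"
    proof (cases "s \<le> 0")
      case True
      then have "l = 0" using l by simp
      then show ?thesis using a0 n0 nn by simp
    next
      case False
      then have "l * n = s" using ln by simp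
      moreover have "Dh p \<bullet> \<Delta> = - \<alpha> * n"
        using dd \<open>l * n = s\<close> unfolding n_def[symmetric] s_def by linarith
      then have "- l * (Dh p \<bullet> \<Delta>) = \<alpha> * (l * n)" by simp
      then have e1: "- l * (Dh p \<bullet> \<Delta>) = \<alpha> * s" using \<open>l * n = s\<close> by simp
      have "\<alpha> * s \<le> \<alpha> * (norm (Df p) * norm (Dh p) + \<alpha> * n)"
        using cs a0 unfolding s_def by (intro mult_left_mono) auto
      then show ?thesis using e1 by simp
    qed
    ultimately show "0 \<le> l \<and> Dh p \<bullet> \<Delta> \<le> - \<alpha> * (norm (Dh p))\<^sup>2 \<and>
      - l * (Dh p \<bullet> \<Delta>) \<le> \<alpha> * (norm (Df p) * norm (Dh p) + \<alpha> * (norm (Dh p))\<^sup>2)"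
      unfolding n_def by simp
  qed
qed

lemma step:
  fixes f h :: "'a::real_inner \<times> 'b::real_inner \<Rightarrow> real" and Df Dh :: "'a \<times> 'b \<Rightarrow> 'a \<times> 'b"
    and p :: "'a \<times> 'b" and \<alpha> l M Lf Lh Cf :: real and \<Delta> :: "'a \<times> 'b"
  assumes df: "\<And>q. f q \<le> f p + Df p \<bullet> (q - p) + Lf / 2 * (norm (q - p))\<^sup>2"
    and dh: "\<And>q. h q \<le> h p + Dh p \<bullet> (q - p) + Lh / 2 * (norm (q - p))\<^sup>2"
    and Cf: "norm (Df p) \<le> Cf"
    and a0: "\<alpha> > 0" and Lh: "Lh > 0" and M: "M = 1 / (2 * Lh)"
    and aLf: "Lf * \<alpha> \<le> 1/2" and aM: "\<alpha>\<^sup>2 \<le> M / 4"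
    and l_def: "l = alg_lambda Df Dh (\<lambda>p. (norm (Dh p))\<^sup>2) \<alpha> p"
    and \<Delta>_def: "\<Delta> = - Df p - l *\<^sub>R Dh p"
  shows "f (p + \<alpha> *\<^sub>R \<Delta>) + M / \<alpha> * h (p + \<alpha> *\<^sub>R \<Delta>)
     \<le> f p + M / \<alpha> * h p - \<alpha> / 2 * ((norm \<Delta>)\<^sup>2 + M * (norm (Dh p))\<^sup>2) + \<alpha> ^ 3 * Cf\<^sup>2 / M"
proof -
  define x where "x = norm (Dh p)"
  define N where "N = (norm \<Delta>)\<^sup>2"
  define u where "u = - l * (Dh p \<bullet> \<Delta>)"
  have M0: "M > 0" using M Lh by simp
  have x0: "x \<ge> 0" "N \<ge> 0" unfolding x_def N_def by auto
  have lf: "l \<ge> 0" "Dh p \<bullet> \<Delta> \<le> - \<alpha> * x\<^sup>2"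
    "u \<le> \<alpha> * (norm (Df p) * x + \<alpha> * x\<^sup>2)"
    using lam_facts[OF less_imp_le[OF a0] l_def \<Delta>_def] unfolding u_def x_def by auto
  have u: "u \<le> \<alpha> * (Cf * x + \<alpha> * x\<^sup>2)"
  proof -
    have "norm (Df p) * x \<le> Cf * x" using Cf x0 by (simp add: mult_right_mono)
    then show ?thesis using lf(3) a0 by (smt (verit) mult_left_mono)
  qed
  have dfd: "Df p \<bullet> \<Delta> = - N + u"
  proof -
    have "\<Delta> \<bullet> \<Delta> = - (Df p \<bullet> \<Delta>) - l * (Dh p \<bullet> \<Delta>)"
      by (subst (1) \<Delta>_def) (simp add: inner_diff_left)
    then show ?thesis unfolding N_def u_def by (simp add: power2_norm_eq_inner)
  qed
  have nq: "(norm (\<alpha> *\<^sub>R \<Delta>))\<^sup>2 = \<alpha>\<^sup>2 * N" unfolding N_def using a0 by (simp add: power_mult_distrib)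
  have e: "p + \<alpha> *\<^sub>R \<Delta> - p = \<alpha> *\<^sub>R \<Delta>" by simp
  have F: "f (p + \<alpha> *\<^sub>R \<Delta>) \<le> f p - \<alpha> * N + \<alpha> * u + Lf / 2 * \<alpha>\<^sup>2 * N"
    using df[of "p + \<alpha> *\<^sub>R \<Delta>", unfolded e nq inner_scaleR_right dfd] by (simp add: algebra_simps)
  have H: "h (p + \<alpha> *\<^sub>R \<Delta>) \<le> h p - \<alpha> * \<alpha> * x\<^sup>2 + Lh / 2 * \<alpha>\<^sup>2 * N"
  proof -
    have "h (p + \<alpha> *\<^sub>R \<Delta>) \<le> h p + \<alpha> * (Dh p \<bullet> \<Delta>) + Lh / 2 * \<alpha>\<^sup>2 * N"
      using dh[of "p + \<alpha> *\<^sub>R \<Delta>", unfolded e nq inner_scaleR_right] by simp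
    moreover have "\<alpha> * (Dh p \<bullet> \<Delta>) \<le> \<alpha> * (- \<alpha> * x\<^sup>2)"
      using mult_left_mono[OF lf(2), of \<alpha>] a0 by simp
    ultimately show ?thesis by simp
  qed
  have H2: "M / \<alpha> * h (p + \<alpha> *\<^sub>R \<Delta>) \<le> M / \<alpha> * h p - M * \<alpha> * x\<^sup>2 + \<alpha> * N / 4"
  proof -
    have "M / \<alpha> * h (p + \<alpha> *\<^sub>R \<Delta>) \<le> M / \<alpha> * (h p - \<alpha> * \<alpha> * x\<^sup>2 + Lh / 2 * \<alpha>\<^sup>2 * N)"
      using H M0 a0 by (intro mult_left_mono) auto
    also have "\<dots> = M / \<alpha> * h p - M * \<alpha> * x\<^sup>2 + (M * Lh) / 2 * \<alpha> * N"
      using a0 by (simp add: field_simps power2_eq_square)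
    also have "(M * Lh) = 1/2" using M Lh by simp
    finally show ?thesis by simp
  qed
  have t1: "Lf / 2 * \<alpha>\<^sup>2 * N \<le> \<alpha> * N / 4"
  proof -
    have "Lf / 2 * \<alpha>\<^sup>2 * N = (Lf * \<alpha>) * (\<alpha> * N) / 2" by (simp add: power2_eq_square)
    also have "\<dots> \<le> (1/2) * (\<alpha> * N) / 2"
      using aLf a0 x0 by (intro divide_right_mono mult_right_mono) auto
    finally show ?thesis by simp
  qed
  have t2: "\<alpha> ^ 3 * x\<^sup>2 \<le> M / 4 * \<alpha> * x\<^sup>2"
  proof -
    have "\<alpha> ^ 3 * x\<^sup>2 = \<alpha>\<^sup>2 * (\<alpha> * x\<^sup>2)" by (simp add: power2_eq_square power3_eq_cube)
    also have "\<dots> \<le> M / 4 * (\<alpha> * x\<^sup>2)" using aM a0 by (intro mult_right_mono) auto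
    finally show ?thesis by simp
  qed
  have t3: "\<alpha>\<^sup>2 * Cf * x \<le> M / 4 * \<alpha> * x\<^sup>2 + \<alpha> ^ 3 * Cf\<^sup>2 / M"
  proof -
    have "M / 4 * \<alpha> * x\<^sup>2 + \<alpha> ^ 3 * Cf\<^sup>2 / M - \<alpha>\<^sup>2 * Cf * x = \<alpha> * (M / 4) * (x - 2 * \<alpha> * Cf / M)\<^sup>2"
      using M0 by (simp add: field_simps power2_eq_square power3_eq_cube)
    also have "\<dots> \<ge> 0" using a0 M0 by simp
    finally show ?thesis by simp
  qed
  have "\<alpha> * u \<le> \<alpha> * (\<alpha> * (Cf * x + \<alpha> * x\<^sup>2))" using u a0 by (simp add: mult_left_mono)
  also have "\<dots> = \<alpha>\<^sup>2 * Cf * x + \<alpha> ^ 3 * x\<^sup>2" by (simp add: algebra_simps power2_eq_square power3_eq_cube)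
  finally have t4: "\<alpha> * u \<le> \<alpha>\<^sup>2 * Cf * x + \<alpha> ^ 3 * x\<^sup>2" .
  show ?thesis
    using F H2 t1 t2 t3 t4 unfolding N_def[symmetric] x_def[symmetric]
    by (simp add: algebra_simps)
qed

theorem mainTheorem4:
  fixes f g h :: "(real^'n::finite) \<times> (real^'m::finite) \<Rightarrow> real"
    and Df Dg Dh :: "(real^'n::finite) \<times> (real^'m::finite) \<Rightarrow> (real^'n::finite) \<times> (real^'m::finite)"
    and D2g :: "(real^'n::finite) \<times> (real^'m::finite) \<Rightarrow> ((real^'n::finite) \<times> (real^'m::finite)) \<Rightarrow>\<^sub>L ((real^'n::finite) \<times> (real^'m::finite))"
    and Lf Lh Cf cr C0 D :: real
  assumes f_grad: "\<And>p. (f has_derivative (\<lambda>v. Df p \<bullet> v)) (at p)"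
    and f_C1: "continuous_on UNIV Df"
    and f_bdd: "bdd_below (range f)"
    and f_lip: "\<And>p q. norm (Df p - Df q) \<le> Lf * norm (p - q)"
    and f_gbd: "\<And>p. norm (Df p) \<le> Cf"
    and g_grad: "\<And>p. (g has_derivative (\<lambda>v. Dg p \<bullet> v)) (at p)"
    and g_hess: "\<And>p. (Dg has_derivative blinfun_apply (D2g p)) (at p)"
    and g_C2: "continuous_on UNIV D2g"
    and h_def: "\<And>p. h p = (norm (snd (Dg p)))\<^sup>2"
    and h_grad: "\<And>p. (h has_derivative (\<lambda>v. Dh p \<bullet> v)) (at p)"
    and h_C1: "continuous_on UNIV Dh"
    and Lh_pos: "Lh > 0"
    and h_lip: "\<And>p q. norm (Dh p - Dh q) \<le> Lh * norm (p - q)"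
    and cr_pos: "cr > 0"
    and regular: "\<And>p. norm (snd (Dg p)) \<le> cr * norm (Dh p)"
    and C0_pos: "C0 > 0"
  shows "\<exists>c>0. \<forall>\<epsilon>>0. \<exists>K::nat. K \<ge> 1 \<and> real K \<le> c * (1 + \<epsilon> powr (-3/2)) \<and>
           (let \<alpha> = real K powr (-1/3);
                \<gamma> = min \<alpha> (1 / (Lf + \<alpha> * Lh));
                \<rho> = (\<lambda>p. (norm (Dh p))\<^sup>2)
            in \<forall>p0. h p0 \<le> \<alpha>\<^sup>2 * C0 \<and> f p0 - Inf (range f) \<le> D \<longrightarrow>
                 (\<exists>t<K. let pt = alg_iter Df Dh \<rho> \<alpha> \<gamma> p0 t;
                            lt = alg_lambda Df Dh \<rho> \<alpha> pt
                        in max ((norm (snd (Dg pt)))\<^sup>2) ((norm (Df pt + lt *\<^sub>R Dh pt))\<^sup>2) \<le> \<epsilon>))"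
proof -
  obtain v :: "(real^'n) \<times> (real^'m)" where v: "norm v = 1"
    by (meson vector_choose_size zero_le_one)
  have "norm (Df v - Df 0) \<le> Lf" using f_lip[of v 0] v by simp
  then have Lf0: "Lf \<ge> 0" by (meson norm_ge_zero order_trans)
  have Cf0: "Cf \<ge> 0" using f_gbd[of 0] norm_ge_zero[of "Df 0"] by linarith
  define M where "M = 1 / (2 * Lh)"
  have M0: "M > 0" using Lh_pos M_def by simp
  define \<alpha>0 where "\<alpha>0 = min 1 (min (1 / (2 * Lf + 1)) (sqrt (M / 4)))"
  have a00: "\<alpha>0 > 0" using Lf0 M0 unfolding \<alpha>0_def by simp
  define S where "S = max D 0 + M * C0 + Cf\<^sup>2 / M"
  have S0: "S > 0"
  proof -
    have "M * C0 > 0" "Cf\<^sup>2 / M \<ge> 0" "max D 0 \<ge> 0" using M0 C0_pos by auto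
    then show ?thesis unfolding S_def by linarith
  qed
  define C where "C = max 1 (cr\<^sup>2 / M) * (2 * S)"
  have C0: "C > 0" using S0 unfolding C_def by (simp add: max_def)
  define c where "c = 1 / \<alpha>0 ^ 3 + C powr (3/2) + 1"
  have c0: "c > 0" using a00 unfolding c_def by (simp add: add_nonneg_pos)
  show ?thesis
  proof (intro exI[of _ c] conjI allI impI c0)
    fix \<epsilon> :: real assume e0: "\<epsilon> > 0"
    define a where "a = min \<alpha>0 (sqrt (\<epsilon> / C))"
    have a0: "a > 0" using a00 e0 C0 unfolding a_def by simp
    define K where "K = nat \<lceil>1 / a ^ 3\<rceil>"
    have Kge: "real K \<ge> 1 / a ^ 3" unfolding K_def by linarith
    have K1: "K \<ge> 1"
    proof -
      have "1 / a ^ 3 > 0" using a0 by simp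
      then have "real K > 0" using Kge by linarith
      then show ?thesis by simp
    qed
    have Kle: "real K \<le> 1 / a ^ 3 + 1"
    proof -
      have "1 / a ^ 3 > 0" using a0 by simp
      then have "\<lceil>1 / a ^ 3\<rceil> \<ge> 0" by linarith
      then have "real K = real_of_int \<lceil>1 / a ^ 3\<rceil>" unfolding K_def by simp
      then show ?thesis by linarith
    qed
    have aK: "1 / a ^ 3 \<le> 1 / \<alpha>0 ^ 3 + C powr (3/2) * \<epsilon> powr (-3/2)"
    proof (cases "a = \<alpha>0")
      case True
      then show ?thesis using C0 e0 by simp
    next
      case False
      then have aeq: "a = sqrt (\<epsilon> / C)" unfolding a_def by (simp add: min_def split: if_splits)
      have "a ^ 3 = (\<epsilon> / C) powr (3/2)"
        using e0 C0 unfolding aeq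
        by (simp add: powr_half_sqrt[symmetric] powr_power)
      then have "1 / a ^ 3 = C powr (3/2) * \<epsilon> powr (-3/2)"
        using e0 C0 by (simp add: powr_divide powr_minus_divide)
      then show ?thesis using a00 by simp
    qed
    have Kc: "real K \<le> c * (1 + \<epsilon> powr (-3/2))"
    proof -
      have ep: "\<epsilon> powr (-3/2) \<ge> 0" by simp
      have "C powr (3/2) * \<epsilon> powr (-3/2) \<le> c * \<epsilon> powr (-3/2)"
        using a00 by (intro mult_right_mono ep) (simp add: c_def)
      moreover have "1 / \<alpha>0 ^ 3 + 1 \<le> c" unfolding c_def by simp
      moreover have "c * (1 + \<epsilon> powr (-3/2)) = c + c * \<epsilon> powr (-3/2)" by (simp add: algebra_simps)
      ultimately show ?thesis using Kle aK by linarith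
    qed
    define \<alpha> where "\<alpha> = real K powr (-1/3)"
    have al0: "\<alpha> > 0" using K1 unfolding \<alpha>_def by simp
    have al3: "\<alpha> ^ 3 = 1 / real K"
    proof -
      have "\<alpha> ^ 3 = real K powr (of_nat 3 * (-1/3))"
        unfolding \<alpha>_def by (rule powr_power) (use K1 in simp)
      also have "\<dots> = real K powr (- 1)" by simp
      also have "\<dots> = 1 / real K" by (simp add: powr_minus_divide)
      finally show ?thesis .
    qed
    have Kal: "real K * \<alpha> ^ 3 = 1" using al3 K1 by simp
    have ala: "\<alpha> \<le> a"
    proof -
      have "\<alpha> ^ 3 \<le> a ^ 3" using al3 Kge a0 K1
        by (simp add: divide_le_eq mult.commute)
      then show ?thesis using power_mono_iff[of \<alpha> a 3] a0 al0 by simp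
    qed
    have al1: "\<alpha> \<le> 1" using ala unfolding a_def \<alpha>0_def by simp
    have alLf: "Lf * \<alpha> \<le> 1/2"
    proof -
      have "\<alpha> \<le> 1 / (2 * Lf + 1)" using ala unfolding a_def \<alpha>0_def by simp
      then have "Lf * \<alpha> \<le> Lf * (1 / (2 * Lf + 1))" using Lf0 by (rule mult_left_mono)
      also have "\<dots> \<le> 1/2" using Lf0 by (simp add: field_simps)
      finally show ?thesis .
    qed
    have alM: "\<alpha>\<^sup>2 \<le> M / 4"
    proof -
      have "\<alpha> \<le> sqrt (M / 4)" using ala unfolding a_def \<alpha>0_def by simp
      then have "\<alpha>\<^sup>2 \<le> (sqrt (M/4))\<^sup>2" using al0 by (simp add: power_mono)
      then show ?thesis using M0 by simp
    qed
    have ale: "\<alpha>\<^sup>2 \<le> \<epsilon> / C"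
    proof -
      have "\<alpha> \<le> sqrt (\<epsilon> / C)" using ala unfolding a_def by simp
      then have "\<alpha>\<^sup>2 \<le> (sqrt (\<epsilon> / C))\<^sup>2" using al0 by (simp add: power_mono)
      then show ?thesis using e0 C0 by simp
    qed
    have gam: "min \<alpha> (1 / (Lf + \<alpha> * Lh)) = \<alpha>"
    proof -
      have "\<alpha>\<^sup>2 * Lh \<le> M / 4 * Lh" using alM Lh_pos by (simp add: mult_right_mono)
      also have "\<dots> = 1/8" using Lh_pos unfolding M_def by simp
      finally have "\<alpha> * (Lf + \<alpha> * Lh) \<le> 1" using alLf by (simp add: algebra_simps power2_eq_square)
      moreover have "Lf + \<alpha> * Lh > 0" using Lf0 al0 Lh_pos by (simp add: add_nonneg_pos)
      ultimately have "\<alpha> \<le> 1 / (Lf + \<alpha> * Lh)" by (simp add: field_simps)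
      then show ?thesis by simp
    qed
    define \<rho> where "\<rho> = (\<lambda>p. (norm (Dh p))\<^sup>2)"
    have main: "\<exists>t<K. let pt = alg_iter Df Dh \<rho> \<alpha> \<alpha> p0 t;
                            lt = alg_lambda Df Dh \<rho> \<alpha> pt
                        in max ((norm (snd (Dg pt)))\<^sup>2) ((norm (Df pt + lt *\<^sub>R Dh pt))\<^sup>2) \<le> \<epsilon>"
      if hp0: "h p0 \<le> \<alpha>\<^sup>2 * C0" and fp0: "f p0 - Inf (range f) \<le> D" for p0
    proof -
      define P where "P = alg_iter Df Dh \<rho> \<alpha> \<alpha> p0"
      define Lm where "Lm = (\<lambda>k. alg_lambda Df Dh \<rho> \<alpha> (P k))"
      define \<Delta> where "\<Delta> = (\<lambda>k. - Df (P k) - Lm k *\<^sub>R Dh (P k))"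
      define \<Phi> where "\<Phi> = (\<lambda>k. f (P k) + M / \<alpha> * h (P k))"
      define X where "X = (\<lambda>k. (norm (\<Delta> k))\<^sup>2 + M * (norm (Dh (P k)))\<^sup>2)"
      have PS: "P (Suc k) = P k + \<alpha> *\<^sub>R \<Delta> k" for k
        unfolding P_def \<Delta>_def Lm_def by (simp add: Let_def prod_eq_iff)
      have stp: "\<Phi> (Suc k) \<le> \<Phi> k - \<alpha> / 2 * X k + \<alpha> ^ 3 * Cf\<^sup>2 / M" for k
        unfolding \<Phi>_def X_def PS
        by (rule step[OF descent[OF f_grad f_lip] descent[OF h_grad h_lip] f_gbd al0 Lh_pos M_def alLf alM])
           (auto simp add: Lm_def \<rho>_def \<Delta>_def)
      have sm: "\<Phi> n \<le> \<Phi> 0 - \<alpha> / 2 * (\<Sum>k<n. X k) + real n * (\<alpha> ^ 3 * Cf\<^sup>2 / M)" for n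
      proof (induction n)
        case (Suc n)
        have "real (Suc n) * (\<alpha> ^ 3 * Cf\<^sup>2 / M) = real n * (\<alpha> ^ 3 * Cf\<^sup>2 / M) + \<alpha> ^ 3 * Cf\<^sup>2 / M"
          by (simp add: distrib_right add_divide_distrib)
        moreover have "\<alpha> / 2 * (\<Sum>k<Suc n. X k) = \<alpha> / 2 * (\<Sum>k<n. X k) + \<alpha> / 2 * X n"
          by (simp add: algebra_simps)
        ultimately show ?case using Suc stp[of n] by linarith
      qed simp
      have hnn: "h q \<ge> 0" for q using h_def[of q] by simp
      have low: "\<Phi> K \<ge> Inf (range f)"
      proof -
        have "Inf (range f) \<le> f (P K)" by (rule cInf_lower[OF rangeI f_bdd])
        moreover have "M / \<alpha> * h (P K) \<ge> 0" using M0 al0 hnn by simp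
        ultimately show ?thesis unfolding \<Phi>_def by simp
      qed
      have up: "\<Phi> 0 \<le> f p0 + M * \<alpha> * C0"
      proof -
        have "M / \<alpha> * h p0 \<le> M / \<alpha> * (\<alpha>\<^sup>2 * C0)" using hp0 M0 al0 by (intro mult_left_mono) auto
        also have "\<dots> = M * \<alpha> * C0" using al0 by (simp add: power2_eq_square)
        finally show ?thesis unfolding \<Phi>_def P_def by simp
      qed
      have "M * \<alpha> * C0 \<le> M * C0" using al1 M0 C0_pos by simp
      moreover have "real K * (\<alpha> ^ 3 * Cf\<^sup>2 / M) = Cf\<^sup>2 / M" using Kal by (simp add: algebra_simps)
      ultimately have sumb: "\<alpha> / 2 * (\<Sum>k<K. X k) \<le> S"
        using sm[of K] low up fp0 unfolding S_def by linarith
      have "\<exists>t<K. X t \<le> 2 * S * \<alpha>\<^sup>2"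
      proof (rule ccontr)
        assume "\<not> ?thesis"
        then have gt: "\<And>t. t \<in> {..<K} \<Longrightarrow> 2 * S * \<alpha>\<^sup>2 < X t" by auto
        have "(\<Sum>k<K. 2 * S * \<alpha>\<^sup>2) < (\<Sum>k<K. X k)"
          by (rule sum_strict_mono) (use K1 gt in \<open>auto simp: lessThan_empty_iff\<close>)
        then have "real K * (2 * S * \<alpha>\<^sup>2) < (\<Sum>k<K. X k)" by simp
        then have "\<alpha> / 2 * (real K * (2 * S * \<alpha>\<^sup>2)) < \<alpha> / 2 * (\<Sum>k<K. X k)"
          using al0 by simp
        moreover have "\<alpha> / 2 * (real K * (2 * S * \<alpha>\<^sup>2)) = S"
          using Kal by (simp add: power2_eq_square power3_eq_cube algebra_simps)
        ultimately show False using sumb by simp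
      qed
      then obtain t where t: "t < K" "X t \<le> 2 * S * \<alpha>\<^sup>2" by blast
      have e1: "(norm (Df (P t) + Lm t *\<^sub>R Dh (P t)))\<^sup>2 = (norm (\<Delta> t))\<^sup>2"
      proof -
        have "Df (P t) + Lm t *\<^sub>R Dh (P t) = - \<Delta> t" unfolding \<Delta>_def by simp
        then show ?thesis by (simp only: norm_minus_cancel)
      qed
      have b1: "(norm (\<Delta> t))\<^sup>2 \<le> X t" unfolding X_def using M0 by simp
      have b2: "(norm (snd (Dg (P t))))\<^sup>2 \<le> cr\<^sup>2 / M * X t"
      proof -
        have "(norm (snd (Dg (P t))))\<^sup>2 \<le> (cr * norm (Dh (P t)))\<^sup>2"
          using regular[of "P t"] by (simp add: power_mono)
        also have "\<dots> = cr\<^sup>2 / M * (M * (norm (Dh (P t)))\<^sup>2)" using M0 by (simp add: power_mult_distrib)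
        also have "\<dots> \<le> cr\<^sup>2 / M * X t" unfolding X_def using M0 by (intro mult_left_mono) auto
        finally show ?thesis .
      qed
      have "max ((norm (snd (Dg (P t))))\<^sup>2) ((norm (Df (P t) + Lm t *\<^sub>R Dh (P t)))\<^sup>2)
          \<le> max 1 (cr\<^sup>2 / M) * X t"
      proof -
        have X0: "X t \<ge> 0" unfolding X_def using M0 by simp
        have m1: "X t \<le> max 1 (cr\<^sup>2 / M) * X t"
          using mult_right_mono[OF max.cobounded1[of 1 "cr\<^sup>2 / M"] X0] by simp
        have m2: "cr\<^sup>2 / M * X t \<le> max 1 (cr\<^sup>2 / M) * X t"
          using mult_right_mono[OF max.cobounded2[of "cr\<^sup>2 / M" 1] X0] by simp
        show ?thesis unfolding e1 using b1 b2 m1 m2 by linarith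
      qed
      also have "\<dots> \<le> max 1 (cr\<^sup>2 / M) * (2 * S * \<alpha>\<^sup>2)" using t(2) by (intro mult_left_mono) auto
      also have "\<dots> = C * \<alpha>\<^sup>2" unfolding C_def by simp
      also have "\<dots> \<le> C * (\<epsilon> / C)" using ale C0 by (intro mult_left_mono) auto
      also have "\<dots> = \<epsilon>" using C0 by simp
      finally show ?thesis using t(1) unfolding Lm_def P_def Let_def by blast
    qed
    have letp: "let \<alpha> = real K powr (-1/3);
                \<gamma> = min \<alpha> (1 / (Lf + \<alpha> * Lh));
                \<rho> = (\<lambda>p. (norm (Dh p))\<^sup>2)
            in \<forall>p0. h p0 \<le> \<alpha>\<^sup>2 * C0 \<and> f p0 - Inf (range f) \<le> D \<longrightarrow>
                 (\<exists>t<K. let pt = alg_iter Df Dh \<rho> \<alpha> \<gamma> p0 t;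
                            lt = alg_lambda Df Dh \<rho> \<alpha> pt
                        in max ((norm (snd (Dg pt)))\<^sup>2) ((norm (Df pt + lt *\<^sub>R Dh pt))\<^sup>2) \<le> \<epsilon>)"
      unfolding Let_def \<alpha>_def[symmetric] gam \<rho>_def[symmetric] using main unfolding Let_def by blast
    show "\<exists>K::nat. K \<ge> 1 \<and> real K \<le> c * (1 + \<epsilon> powr (-3/2)) \<and> (let \<alpha> = real K powr (-1/3);
                \<gamma> = min \<alpha> (1 / (Lf + \<alpha> * Lh));
                \<rho> = (\<lambda>p. (norm (Dh p))\<^sup>2)
            in \<forall>p0. h p0 \<le> \<alpha>\<^sup>2 * C0 \<and> f p0 - Inf (range f) \<le> D \<longrightarrow>
                 (\<exists>t<K. let pt = alg_iter Df Dh \<rho> \<alpha> \<gamma> p0 t;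
                            lt = alg_lambda Df Dh \<rho> \<alpha> pt
                        in max ((norm (snd (Dg pt)))\<^sup>2) ((norm (Df pt + lt *\<^sub>R Dh pt))\<^sup>2) \<le> \<epsilon>))"
      using K1 Kc letp by blast
  qed
qed

end
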